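(* For every positive integer $n$ and every complex number $q$ with $0<|q|<1$, \[ \sum_{k=1}^{n}q^{2k}[8k+1]\frac{(q;q^2)_{k}^2(q;q^2)_{2k}}{(q^2;q^2)_{2k}(q^6;q^6)_{k}^2}\frac{(q^{3+6n},q^{-6n};q^6)_k}{(q^{3+6n},q^{-6n};q^2)_k}\sum_{i=1}^{k}\left\{\frac{q^{2i-1}}{[2i-1]^2}-\frac{q^{6i}}{[6i]^2}\right\} =\frac{(q^3;q^2)_{3n}(q^3;q^6)_{n}}{(q^2;q^2)_{3n}(q^6;q^6)_{n}}\sum_{j=1}^{2n}(-1)^{j-1}\frac{q^{3j}}{[3j]^2}. \]
   Context: For complex $x,q$ and an integer $n\ge 0$, $(x;q)_n=\prod_{i=0}^{n-1}(1-xq^i)$, and $(x_1,\dots,x_r;q)_n=(x_1;q)_n\cdots(x_r;q)_n$. The $q$-integer is $[n]=1+q+\cdots+q^{n-1}=(1-q^n)/(1-q)$. *)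

theory Defs
  imports Complex_Main
begin

definition qpoch :: "complex \<Rightarrow> complex \<Rightarrow> nat \<Rightarrow> complex" where
  "qpoch x q n = (\<Prod>i<n. 1 - x * q ^ i)"

definition qint :: "complex \<Rightarrow> nat \<Rightarrow> complex" where
  "qint q n = (1 - q ^ n) / (1 - q)"

end

theory Submission
  imports Defs
begin


definition s0 :: "complex \<Rightarrow> complex \<Rightarrow> complex \<Rightarrow> complex" where
 "s0 q X Y = ((1-q^3*Y)*(q^6*Y-X^3)*((1-q^3*Y*X)*(1-q^5*Y*X)*(1-q^7*Y*X))*((q^4*Y-1)*(q^2*Y-1))*(1-q^3*Y))
    / ((1-q^3*Y*X^3)*((q^6*Y-X)*(q^4*Y-X)*(q^2*Y-X))*((1-q^2*Y)*(1-q^4*Y)*(1-q^6*Y)^2))"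

definition s1c :: "complex \<Rightarrow> complex \<Rightarrow> complex \<Rightarrow> complex" where
 "s1c q X Y = - (q^4*Y*(1-q^9*Y^2)*(q^2-X^2)*(1-X^2)*X^2*(1-q^7*X*Y))
    / ((1-q*X^4)*(1-q^6*Y)^2*(q^6*Y-X)*(q^4*Y-X)*(1-q^3*X^3*Y))"

definition s1 :: "complex \<Rightarrow> complex \<Rightarrow> complex \<Rightarrow> complex" where
 "s1 q X Y = s1c q X Y * (1-X^3)^2 / X^3"

definition t1 :: "complex \<Rightarrow> complex \<Rightarrow> complex \<Rightarrow> complex" where
 "t1 q X Y = - (q^2*Y*(1-q^9*Y^2)*(1-q*X)^2*(1-q*X^2)*(1-q^3*X^2)*(q^6*Y-X^3))
    / (X*(1-q*X^4)*(q^6*Y-X)*(1-q^6*Y)^2*(q^4*Y-X)*(q^2*Y-X))"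

lemma frac_mul: fixes N D M m :: complex
  assumes "D \<noteq> 0" "M = D * m" shows "N / D * M = N * m"
  using assms by simp

lemma polyW: fixes q X Y :: complex shows "1 * (X^3*(1-q*X^4)*(1-q^6*Y)^2*((q^6*Y-X)*(q^4*Y-X)*(q^2*Y-X))*(1-q^3*X^3*Y)*(1-q^2*Y)*(1-q^4*Y)) - ((1-q^3*Y)*(q^6*Y-X^3)*((1-q^3*Y*X)*(1-q^5*Y*X)*(1-q^7*Y*X))*((q^4*Y-1)*(q^2*Y-1))*(1-q^3*Y)) * (X^3*(1-q*X^4))
  = (- (q^2*Y*(1-q^9*Y^2)*(1-q*X)^2*(1-q*X^2)*(1-q^3*X^2)*(q^6*Y-X^3))) * (X^2*(1-q^3*X^3*Y)*(1-q^2*Y)*(1-q^4*Y))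
   - (- (q^4*Y*(1-q^9*Y^2)*(q^2-X^2)*(1-X^2)*X^2*(1-q^7*X*Y)) * (1-X^3)^2) * ((q^2*Y-X)*(1-q^2*Y)*(1-q^4*Y))"
    by algebra

lemma coreW:
  fixes q X Y :: complex
  assumes nz: "X \<noteq> 0" "1-q*X^4 \<noteq> 0" "1-q^6*Y \<noteq> 0" "q^6*Y-X \<noteq> 0" "q^4*Y-X \<noteq> 0" "q^2*Y-X \<noteq> 0"
     "1-q^3*X^3*Y \<noteq> 0" "1-q^2*Y \<noteq> 0" "1-q^4*Y \<noteq> 0"
  shows "1 - s0 q X Y = t1 q X Y - s1 q X Y"
proof -
  define M where "M = X^3*(1-q*X^4)*(1-q^6*Y)^2*((q^6*Y-X)*(q^4*Y-X)*(q^2*Y-X))*(1-q^3*X^3*Y)*(1-q^2*Y)*(1-q^4*Y)"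
  have M0: "M \<noteq> 0" unfolding M_def using nz by simp
  have e3: "1-q^3*Y*X^3 = 1-q^3*X^3*Y" by (simp add: ac_simps)
  have a: "s0 q X Y * M = ((1-q^3*Y)*(q^6*Y-X^3)*((1-q^3*Y*X)*(1-q^5*Y*X)*(1-q^7*Y*X))*((q^4*Y-1)*(q^2*Y-1))*(1-q^3*Y)) * (X^3*(1-q*X^4))"
    unfolding s0_def e3 by (rule frac_mul, use nz in simp, simp only: M_def mult_ac power2_eq_square power3_eq_cube)
  have b: "t1 q X Y * M = (- (q^2*Y*(1-q^9*Y^2)*(1-q*X)^2*(1-q*X^2)*(1-q^3*X^2)*(q^6*Y-X^3))) * (X^2*(1-q^3*X^3*Y)*(1-q^2*Y)*(1-q^4*Y))"
    unfolding t1_def by (rule frac_mul, use nz in simp, simp only: M_def mult_ac power2_eq_square power3_eq_cube)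
  have c: "s1 q X Y * M = (- (q^4*Y*(1-q^9*Y^2)*(q^2-X^2)*(1-X^2)*X^2*(1-q^7*X*Y)) * (1-X^3)^2) * ((q^2*Y-X)*(1-q^2*Y)*(1-q^4*Y))"
  proof -
    have e: "s1 q X Y = (- (q^4*Y*(1-q^9*Y^2)*(q^2-X^2)*(1-X^2)*X^2*(1-q^7*X*Y)) * (1-X^3)^2) / (((1-q*X^4)*(1-q^6*Y)^2*(q^6*Y-X)*(q^4*Y-X)*(1-q^3*X^3*Y)) * X^3)"
      unfolding s1_def s1c_def by (simp only: times_divide_eq_left divide_divide_eq_left)
    show ?thesis unfolding e
      by (rule frac_mul, use nz in simp, simp only: M_def mult_ac power2_eq_square power3_eq_cube)
  qed
  have "(1 - s0 q X Y) * M = 1 * M - s0 q X Y * M" by (rule left_diff_distrib)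
  also have "\<dots> = t1 q X Y * M - s1 q X Y * M" unfolding a b c unfolding M_def by (rule polyW)
  also have "\<dots> = (t1 q X Y - s1 q X Y) * M" by (rule left_diff_distrib[symmetric])
  finally have "(1 - s0 q X Y) * M = (t1 q X Y - s1 q X Y) * M" .
  thus ?thesis by (rule mult_right_cancel[THEN iffD1, OF M0])
qed

lemma polyH: fixes q X Y :: complex shows
  "((- (q^2*Y*(1-q^9*Y^2)*(1-q*X)^2*(1-q*X^2)*(1-q^3*X^2)*(q^6*Y-X^3)))*(q*X)) * ((1-q^3*X^3*Y)*(1-q^2*Y)*(1-q^4*Y)*(1-q^3*Y)^2) - (- (q^4*Y*(1-q^9*Y^2)*(q^2-X^2)*(1-X^2)*X^2*(1-q^7*X*Y))) * (X*(1-q*X)^2*(q^2*Y-X)*(1-q^2*Y)*(1-q^4*Y)*(1-q^3*Y)^2) + (((1-q^3*Y)*(q^6*Y-X^3)*((1-q^3*Y*X)*(1-q^5*Y*X)*(1-q^7*Y*X))*((q^4*Y-1)*(q^2*Y-1))*(1-q^3*Y))*(q^3*Y)) * (X*(1-q*X)^2*(1-q*X^4)) - q^6*Y * (X*(1-q*X)^2*(1-q*X^4)*((q^6*Y-X)*(q^4*Y-X)*(q^2*Y-X))*(1-q^3*X^3*Y)*(1-q^2*Y)*(1-q^4*Y)*(1-q^3*Y)^2) = 0"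
  by algebra

lemma coreH:
  fixes q X Y :: complex
  assumes nz: "X \<noteq> 0" "1-q*X \<noteq> 0" "1-q*X^4 \<noteq> 0" "1-q^6*Y \<noteq> 0" "q^6*Y-X \<noteq> 0" "q^4*Y-X \<noteq> 0" "q^2*Y-X \<noteq> 0"
     "1-q^3*X^3*Y \<noteq> 0" "1-q^2*Y \<noteq> 0" "1-q^4*Y \<noteq> 0" "1-q^3*Y \<noteq> 0"
  shows "t1 q X Y * (q*X/(1-q*X)^2) - s1c q X Y + s0 q X Y * (q^3*Y/(1-q^3*Y)^2) - q^6*Y/(1-q^6*Y)^2 = 0"
proof -
  define M where "M = X*(1-q*X)^2*(1-q*X^4)*(1-q^6*Y)^2*((q^6*Y-X)*(q^4*Y-X)*(q^2*Y-X))*(1-q^3*X^3*Y)*(1-q^2*Y)*(1-q^4*Y)*(1-q^3*Y)^2"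
  have M0: "M \<noteq> 0" unfolding M_def using nz by simp
  have e3: "1-q^3*Y*X^3 = 1-q^3*X^3*Y" by (simp add: ac_simps)
  have a: "t1 q X Y * (q*X/(1-q*X)^2) * M = ((- (q^2*Y*(1-q^9*Y^2)*(1-q*X)^2*(1-q*X^2)*(1-q^3*X^2)*(q^6*Y-X^3)))*(q*X)) * ((1-q^3*X^3*Y)*(1-q^2*Y)*(1-q^4*Y)*(1-q^3*Y)^2)"
    unfolding t1_def times_divide_times_eq by (rule frac_mul, use nz in simp, simp only: M_def mult_ac power2_eq_square power3_eq_cube)
  have b: "s1c q X Y * M = (- (q^4*Y*(1-q^9*Y^2)*(q^2-X^2)*(1-X^2)*X^2*(1-q^7*X*Y))) * (X*(1-q*X)^2*(q^2*Y-X)*(1-q^2*Y)*(1-q^4*Y)*(1-q^3*Y)^2)"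
    unfolding s1c_def by (rule frac_mul, use nz in simp, simp only: M_def mult_ac power2_eq_square power3_eq_cube)
  have c: "s0 q X Y * (q^3*Y/(1-q^3*Y)^2) * M = (((1-q^3*Y)*(q^6*Y-X^3)*((1-q^3*Y*X)*(1-q^5*Y*X)*(1-q^7*Y*X))*((q^4*Y-1)*(q^2*Y-1))*(1-q^3*Y))*(q^3*Y)) * (X*(1-q*X)^2*(1-q*X^4))"
    unfolding s0_def e3 times_divide_times_eq by (rule frac_mul, use nz in simp, simp only: M_def mult_ac power2_eq_square power3_eq_cube)
  have d: "q^6*Y/(1-q^6*Y)^2 * M = q^6*Y * (X*(1-q*X)^2*(1-q*X^4)*((q^6*Y-X)*(q^4*Y-X)*(q^2*Y-X))*(1-q^3*X^3*Y)*(1-q^2*Y)*(1-q^4*Y)*(1-q^3*Y)^2)"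
    by (rule frac_mul, use nz in simp, simp only: M_def mult_ac power2_eq_square power3_eq_cube)
  have "(t1 q X Y * (q*X/(1-q*X)^2) - s1c q X Y + s0 q X Y * (q^3*Y/(1-q^3*Y)^2) - q^6*Y/(1-q^6*Y)^2) * M
      = t1 q X Y * (q*X/(1-q*X)^2) * M - s1c q X Y * M + s0 q X Y * (q^3*Y/(1-q^3*Y)^2) * M - q^6*Y/(1-q^6*Y)^2 * M"
    by (simp only: left_diff_distrib distrib_right)
  also have "\<dots> = 0" unfolding a b c d by (rule polyH)
  finally have "(t1 q X Y * (q*X/(1-q*X)^2) - s1c q X Y + s0 q X Y * (q^3*Y/(1-q^3*Y)^2) - q^6*Y/(1-q^6*Y)^2) * M = 0" .
  thus ?thesis using M0 by (simp only: mult_eq_0_iff) blast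
qed

definition uk :: "complex \<Rightarrow> complex \<Rightarrow> complex" where
 "uk q X = q^2*(1-q^9*X^4)*((1-q*X)^2*(1-q*X^2)*(1-q^3*X^2)) / ((1-q*X^4)*((1-q^2*X^2)*(1-q^4*X^2)*(1-q^6*X^3)^2))"

definition vk :: "complex \<Rightarrow> complex \<Rightarrow> complex \<Rightarrow> complex" where
 "vk q X Y = ((1-q^9*Y*X^3)*(q^6*Y-X^3)) / ((1-q^9*Y*X)*(q^6*Y-X))"

lemma T1gen: fixes q X Y a1 a2 a3 a4 b1 b2 b3 b4 c1 c2 d1 d2 e1 e2 e3 e4 :: complex
  assumes "q\<noteq>0" "X\<noteq>0" "a1\<noteq>0" "b1\<noteq>0" "b2\<noteq>0" "b3\<noteq>0" "b4\<noteq>0" "c1\<noteq>0" "d1\<noteq>0" "d2\<noteq>0" "e2\<noteq>0" "e3\<noteq>0" "e4\<noteq>0"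
  shows "q^2*a1*(a2^2*a3*a4)/(b1*(b2*b3*b4^2)) * ((c1*c2)/(d1*d2)) * ((- (q^4*Y*e1*(q^2*b2)*b3*(q^4*X^2)*d1)) / (a1*e2^2*(q^2*e3)*(q^2*e4)*c1) * b4^2 / (q^6*X^3))
    = - (q^2*Y*e1*a2^2*a3*a4*c2) / (X*b1*d2*e2^2*e3*e4)"
  using assms by (simp add: field_simps power2_eq_square power3_eq_cube) (simp add: eval_nat_numeral)

definition sig :: "complex \<Rightarrow> complex \<Rightarrow> complex \<Rightarrow> complex" where
 "sig q X Y = ((1-q^3*Y)*(q^6*Y-X^3)*((1-q^3*Y*X)*(1-q^5*Y*X)*(1-q^7*Y*X))*((q^6*Y-1)*(q^4*Y-1)*(q^2*Y-1)))
    / ((1-q^3*Y*X^3)*(q^6*Y-1)*((1-q^3*Y)*(1-q^5*Y)*(1-q^7*Y))*((q^6*Y-X)*(q^4*Y-X)*(q^2*Y-X)))"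

definition gam :: "complex \<Rightarrow> complex \<Rightarrow> complex" where
 "gam q Y = ((1-q^3*Y)*(1-q^5*Y)*(1-q^7*Y)*(1-q^3*Y))/((1-q^2*Y)*(1-q^4*Y)*(1-q^6*Y)*(1-q^6*Y))"

lemma S0gen: fixes A B P1 P2 P3 Q1 Q2 Q3 C R5 R7 X1 X2 X3 E2 E4 E6 :: complex
  assumes "A\<noteq>0" "Q1\<noteq>0" "R5\<noteq>0" "R7\<noteq>0" "C\<noteq>0" "X1\<noteq>0" "X2\<noteq>0" "X3\<noteq>0" "E2\<noteq>0" "E4\<noteq>0" "E6\<noteq>0"
  shows "(A*B*(P1*P2*P3)*(Q1*Q2*Q3)) / (C*Q1*(A*R5*R7)*(X1*X2*X3)) * ((A*R5*R7*A)/(E2*E4*E6*E6))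
    = (A*B*(P1*P2*P3)*(Q2*Q3)*A) / (C*(X1*X2*X3)*(E2*E4*E6^2))"
  using assms by (simp add: field_simps power2_eq_square)

lemma S0cancel: fixes q X Y :: complex
  assumes "1-q^3*Y\<noteq>0" "q^6*Y-1\<noteq>0" "1-q^5*Y\<noteq>0" "1-q^7*Y\<noteq>0" "1-q^3*Y*X^3\<noteq>0" "q^6*Y-X\<noteq>0" "q^4*Y-X\<noteq>0" "q^2*Y-X\<noteq>0"
     "1-q^2*Y\<noteq>0" "1-q^4*Y\<noteq>0" "1-q^6*Y\<noteq>0"
  shows "sig q X Y * gam q Y = s0 q X Y"
  unfolding sig_def gam_def s0_def by (rule S0gen[OF assms])

lemma T1cancel: fixes q X Y :: complex
  assumes nz: "q\<noteq>0" "X\<noteq>0" "1-q^9*X^4\<noteq>0" "1-q*X^4\<noteq>0" "1-q^2*X^2\<noteq>0" "1-q^4*X^2\<noteq>0" "1-q^6*X^3\<noteq>0"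
     "1-q^9*Y*X^3\<noteq>0" "1-q^9*Y*X\<noteq>0" "q^6*Y-X\<noteq>0" "1-q^6*Y\<noteq>0" "q^4*Y-X\<noteq>0" "q^2*Y-X\<noteq>0"
  shows "uk q X * vk q X Y * s1 q (q^2*X) Y = t1 q X Y"
proof -
  have i1: "(q^2*X)^2 = q^4*X^2" by algebra
  have i2: "(q^2*X)^3 = q^6*X^3" by algebra
  have i3: "(q^2*X)^4 = q^8*X^4" by algebra
  have i4: "q*(q^8*X^4) = q^9*X^4" by algebra
  have i5: "q^7*(q^2*X)*Y = q^9*Y*X" by algebra
  have i6: "q^3*(q^6*X^3)*Y = q^9*Y*X^3" by algebra
  have i7: "q^2 - q^4*X^2 = q^2*(1-q^2*X^2)" by algebra
  have i8: "q^6*Y - q^2*X = q^2*(q^4*Y-X)" by algebra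
  have i9: "q^4*Y - q^2*X = q^2*(q^2*Y-X)" by algebra
  have s: "s1 q (q^2*X) Y = (- (q^4*Y*(1-q^9*Y^2)*(q^2*(1-q^2*X^2))*(1-q^4*X^2)*(q^4*X^2)*(1-q^9*Y*X))) / ((1-q^9*X^4)*(1-q^6*Y)^2*(q^2*(q^4*Y-X))*(q^2*(q^2*Y-X))*(1-q^9*Y*X^3)) * (1-q^6*X^3)^2 / (q^6*X^3)"
    unfolding s1_def s1c_def by (simp only: i1 i2 i3 i4 i5 i6 i7 i8 i9)
  show ?thesis unfolding s uk_def vk_def t1_def
    by (rule T1gen[OF nz])
qed






lemma qpoch_0[simp]: "qpoch x p 0 = 1" by (simp add: qpoch_def)
lemma qpoch_Suc: "qpoch x p (Suc k) = qpoch x p k * (1 - x*p^k)" by (simp add: qpoch_def)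
lemma qpoch_shift: "qpoch x p (Suc k) = (1 - x) * qpoch (x*p) p k"
  unfolding qpoch_def prod.lessThan_Suc_shift by (simp add: mult_ac)
lemma qpoch_nz: "(\<And>i. i<k \<Longrightarrow> x*p^i \<noteq> 1) \<Longrightarrow> qpoch x p k \<noteq> 0"
  unfolding qpoch_def by (auto simp: prod_zero_iff)
lemma qpoch_z: "i<k \<Longrightarrow> x*p^i = 1 \<Longrightarrow> qpoch x p k = 0"
  unfolding qpoch_def by (rule prod_zero) auto

definition UU :: "complex \<Rightarrow> nat \<Rightarrow> complex" where
 "UU q k = q ^ (2*k) * qint q (8*k+1) * (qpoch q (q^2) k ^ 2 * qpoch q (q^2) (2*k))
              / (qpoch (q^2) (q^2) (2*k) * qpoch (q^6) (q^6) k ^ 2)"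
definition VV :: "complex \<Rightarrow> nat \<Rightarrow> nat \<Rightarrow> complex" where
 "VV q n k = (qpoch (q ^ (3+6*n)) (q^6) k * qpoch (inverse (q ^ (6*n))) (q^6) k)
              / (qpoch (q ^ (3+6*n)) (q^2) k * qpoch (inverse (q ^ (6*n))) (q^2) k)"
definition CC :: "complex \<Rightarrow> nat \<Rightarrow> complex" where
 "CC q n = (qpoch (q^3) (q^2) (3*n) * qpoch (q^3) (q^6) n)
           / (qpoch (q^2) (q^2) (3*n) * qpoch (q^6) (q^6) n)"
definition HH :: "complex \<Rightarrow> nat \<Rightarrow> complex" where
 "HH q k = (\<Sum>i=1..k. q ^ (2*i-1) / (qint q (2*i-1))^2 - q ^ (6*i) / (qint q (6*i))^2)"
definition DD :: "complex \<Rightarrow> nat \<Rightarrow> complex" where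
 "DD q n = (\<Sum>j=1..2*n. (-1) ^ (j-1) * q ^ (3*j) / (qint q (3*j))^2)"
definition FF :: "complex \<Rightarrow> nat \<Rightarrow> nat \<Rightarrow> complex" where
 "FF q n k = UU q k * VV q n k / CC q n"
definition GG :: "complex \<Rightarrow> nat \<Rightarrow> nat \<Rightarrow> complex" where
 "GG q n k = FF q (Suc n) k * s1 q (q^(2*k)) (q^(6*n))"

lemma Ugen: fixes X e z a b c d al b1 b2 g1 g2 de q :: complex
  assumes "z \<noteq> 0" "c\<noteq>0" "d\<noteq>0" "g1\<noteq>0" "g2\<noteq>0" "de\<noteq>0" "1-q \<noteq> 0"
  shows "(q^2*X) * (e/(1-q)) * ((a*al)^2 * (b*b1*b2)) / ((c*g1*g2) * (d*de)^2)
     = (X * (z/(1-q)) * (a^2*b) / (c*d^2)) * (q^2*e*(al^2*b1*b2)/(z*(g1*g2*de^2)))"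
  using assms by (simp add: field_simps power2_eq_square)

lemma V2gen: fixes A1 A2 A3 A4 B1 B2 B3 B4 A B P Q C Q1 R QX :: complex
  assumes r1: "A1 * C = B1 * A" and r2: "A2 * Q1 = B2 * B" and r3: "B3 * R = A3 * P" and r4: "A4 * Q = B4 * QX"
    and nz: "C\<noteq>0" "Q1\<noteq>0" "P\<noteq>0" "Q\<noteq>0" "B3\<noteq>0" "B4\<noteq>0"
  shows "A1*A2/(A3*A4) = B1*B2/(B3*B4) * ((A*B*P*Q)/(C*Q1*R*QX))"
proof -
  have a1: "A1 = B1*A/C" using r1 nz by (simp add: field_simps)
  have a2: "A2 = B2*B/Q1" using r2 nz by (simp add: field_simps)
  have a3: "A3 = B3*R/P" using r3 nz by (simp add: field_simps)
  have a4: "A4 = B4*QX/Q" using r4 nz by (simp add: field_simps)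
  show ?thesis unfolding a1 a2 a3 a4 using nz by (simp add: field_simps)
qed

lemma Vgen: fixes A1 A2 A3 A4 x1 x3 y2 y4 Z :: complex
  assumes "A3\<noteq>0" "A4\<noteq>0" "x3\<noteq>0" "y4\<noteq>0" "Z\<noteq>0"
  shows "(A1*x1*(A2*(y2/Z)))/((A3*x3)*(A4*(y4/Z))) = (A1*A2)/(A3*A4) * ((x1*y2)/(x3*y4))"
  using assms by (simp add: field_simps)

lemma invgen: fixes W V :: complex shows "W \<noteq> 0 \<Longrightarrow> 1 - inverse W * V = (W - V)/W"
  by (simp add: field_simps)

lemma Cgen: fixes a b c d x1 x2 x3 x4 y1 y2 y3 y4 :: complex
  assumes "c\<noteq>0" "d\<noteq>0" "y1\<noteq>0" "y2\<noteq>0" "y3\<noteq>0" "y4\<noteq>0"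
  shows "(a*x1*x2*x3*(b*x4))/((c*y1*y2*y3)*(d*y4)) = (a*b)/(c*d) * ((x1*x2*x3*x4)/(y1*y2*y3*y4))"
  using assms by (simp add: field_simps)

lemma R2gen: fixes y Z A B W :: complex assumes "y*Z = 1" "(1-y)*A = B*(1-y*W)" shows "A*(Z-1) = B*(Z-W)"
proof -
  have "A*(Z-1) = Z*((1-y)*A) + A*(y*Z - 1)" by algebra
  also have "\<dots> = Z*(B*(1-y*W))" using assms by simp
  also have "\<dots> = B*(Z-W) + B*W*(1 - y*Z)" by algebra
  also have "\<dots> = B*(Z-W)" using assms by simp
  finally show ?thesis .
qed

lemma R4gen: fixes y q Y A B X :: complex
  assumes yz: "y*(q^6*Y) = 1" and q0: "q \<noteq> 0"
    and e: "(1-y)*(1-y*q^2)*(1-y*q^4)*A = B*((1-y*X)*(1-y*q^2*X)*(1-y*q^4*X))"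
  shows "A*((q^6*Y-1)*(q^4*Y-1)*(q^2*Y-1)) = B*((q^6*Y-X)*(q^4*Y-X)*(q^2*Y-X))"
proof -
  define Z where "Z = q^6*Y"
  have yz': "y*Z = 1" using yz Z_def by simp
  have "q^6*(A*((q^6*Y-1)*(q^4*Y-1)*(q^2*Y-1))) = A*((Z-1)*(Z-q^2)*(Z-q^4))" unfolding Z_def by algebra
  also have "\<dots> = A*((Z-y*Z)*(Z-y*Z*q^2)*(Z-y*Z*q^4))" using yz' by simp
  also have "\<dots> = Z^3*((1-y)*(1-y*q^2)*(1-y*q^4)*A)" by algebra
  also have "\<dots> = Z^3*(B*((1-y*X)*(1-y*q^2*X)*(1-y*q^4*X)))" by (simp only: e)
  also have "\<dots> = B*((Z-y*Z*X)*(Z-y*Z*q^2*X)*(Z-y*Z*q^4*X))" by algebra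
  also have "\<dots> = B*((Z-X)*(Z-q^2*X)*(Z-q^4*X))" using yz' by simp
  also have "\<dots> = q^6*(B*((q^6*Y-X)*(q^4*Y-X)*(q^2*Y-X)))" unfolding Z_def by algebra
  finally show ?thesis using q0 by simp
qed

lemma fr1: fixes a b c d :: complex shows "b \<noteq> 0 \<Longrightarrow> d \<noteq> 0 \<Longrightarrow> a*d = (d + c)*b \<Longrightarrow> a/b = 1 + c/d"
  by (simp add: field_simps)

lemma stepgen: fixes F1 t1 s1 s0 HH a b c6 e f :: complex
  assumes "t1 - s1 - 1 + s0 = 0" "t1*a - s1*b + e*s0 - f = 0"
  shows "F1*t1*(HH + (a - c6) + (c6 - e)) - F1*s1*(HH + (b - e)) = (F1 - F1*s0)*HH - (e - f)*F1"
proof -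
  have "F1*t1*(HH + (a - c6) + (c6 - e)) - F1*s1*(HH + (b - e)) - ((F1 - F1*s0)*HH - (e - f)*F1)
      = F1*((t1 - s1 - 1 + s0)*(HH - e) + (t1*a - s1*b + e*s0 - f))" by algebra
  also have "\<dots> = 0" using assms by simp
  finally show ?thesis by simp
qed

lemma h1gen: fixes t1 s1 s0 a b e f A sc E Fh r :: complex
  assumes "a = r*A" "s1*b = r*sc" "e = r*E" "f = r*Fh" "t1*A - sc + s0*E - Fh = 0"
  shows "t1*a - s1*b + e*s0 - f = 0"
proof -
  have "t1*a - s1*b + e*s0 - f = r*(t1*A - sc + s0*E - Fh)" unfolding assms(1-4) by algebra
  thus ?thesis using assms(5) by simp
qed

lemma basegen: fixes A B C D E F q :: complex
  assumes "B \<noteq> 0" "D \<noteq> 0" "F \<noteq> 0" "A*(q*D - C)*F = (E*D - C*F)*B"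
  shows "A/B*(q - C/D) = E/F - C/D"
proof -
  have l: "A/B*(q - C/D) = (A*(q*D - C))/(B*D)" using assms by (simp add: field_simps)
  have r: "E/F - C/D = (E*D - C*F)/(F*D)" using assms by (simp add: field_simps)
  have "(A*(q*D - C))*(F*D) = (E*D - C*F)*(B*D)" using assms(4) by algebra
  thus ?thesis unfolding l r using assms by (simp add: frac_eq_eq)
qed

context
  fixes q :: complex
  assumes q0: "q \<noteq> 0" and q1: "cmod q < 1"
begin

lemma qp_lt: "a < b \<Longrightarrow> q^a \<noteq> q^b"
proof
  assume ab: "a < b" and e: "q^a = q^b"
  have "q^b = q^a * q^(b-a)" using ab by (simp add: power_add[symmetric])
  hence "q^(b-a) = 1" using e q0 by simp
  hence "cmod q ^ (b-a) = 1" by (metis norm_one norm_power)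
  moreover have "cmod q ^ (b-a) < 1"
  proof -
    obtain m where m: "b - a = Suc m" using ab by (metis Suc_diff_Suc diff_Suc_Suc)
    show ?thesis unfolding m using q0 q1 by (intro power_Suc_less_one) auto
  qed
  ultimately show False by simp
qed

lemma qp_eq[simp]: "q^a = q^b \<longleftrightarrow> a = b"
  using qp_lt[of a b] qp_lt[of b a] by (cases a b rule: linorder_cases) auto
lemma qp_eq1[simp]: "q^a = 1 \<longleftrightarrow> a = 0"
  using qp_eq[of a 0] by simp
lemma qp_eq1'[simp]: "1 = q^a \<longleftrightarrow> a = 0"
  using qp_eq[of 0 a] by simp
lemma q_eq1: "q \<noteq> 1" using qp_eq1[of 1] by simp
lemma qp_nz[simp]: "q^a \<noteq> 0" using q0 by simp

lemmas pw = power_mult[symmetric] power_add[symmetric]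

lemma qint_nz: "0 < m \<Longrightarrow> qint q m \<noteq> 0"
  unfolding qint_def using q_eq1 by simp

lemma CC_nz: "CC q n \<noteq> 0"
proof -
  have "qpoch (q^3) (q^2) (3*n) \<noteq> 0" by (rule qpoch_nz) (simp add: pw flip: power_Suc)
  moreover have "qpoch (q^3) (q^6) n \<noteq> 0" by (rule qpoch_nz) (simp add: pw flip: power_Suc)
  moreover have "qpoch (q^2) (q^2) (3*n) \<noteq> 0" by (rule qpoch_nz) (simp add: pw flip: power_Suc)
  moreover have "qpoch (q^6) (q^6) n \<noteq> 0" by (rule qpoch_nz) (simp add: pw flip: power_Suc)
  ultimately show ?thesis unfolding CC_def by simp
qed


lemma inv_eq1: "inverse (q^m) * w = 1 \<longleftrightarrow> w = q^m"
  using q0 by (auto simp: field_simps)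

lemma UU_Suc: "UU q (Suc k) = UU q k * uk q (q^(2*k))"
proof -
  define X where "X = q^(2*k)"
  define a where "a = qpoch q (q^2) k"
  define b where "b = qpoch q (q^2) (2*k)"
  define c where "c = qpoch (q^2) (q^2) (2*k)"
  define d where "d = qpoch (q^6) (q^6) k"
  have g1: "q*(q^2)^k = q*X" unfolding X_def by (simp add: pw flip: power_Suc)
  have g2: "q*(q^2)^(2*k) = q*X^2" unfolding X_def by (simp add: pw flip: power_Suc)
  have g3: "q*(q^2)^(Suc(2*k)) = q^3*X^2" unfolding X_def by (simp add: pw flip: power_Suc)
  have g4: "q^2*(q^2)^(2*k) = q^2*X^2" unfolding X_def by (simp add: pw flip: power_Suc)
  have g5: "q^2*(q^2)^(Suc(2*k)) = q^4*X^2" unfolding X_def by (simp add: pw flip: power_Suc)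
  have g6: "q^6*(q^6)^k = q^6*X^3" unfolding X_def by (simp add: pw flip: power_Suc)
  have g7: "q^(Suc (Suc (2*k))) = q^2*X" unfolding X_def by (simp add: pw flip: power_Suc)
  have g8: "q^(8*Suc k+1) = q^9*X^4" unfolding X_def by (simp add: pw flip: power_Suc)
  have g9: "q^(8*k+1) = q*X^4" unfolding X_def by (simp add: pw flip: power_Suc)
  have s2: "2*Suc k = Suc(Suc(2*k))" by simp
  have L: "UU q (Suc k) = (q^2*X) * ((1-q^9*X^4)/(1-q)) * ((a*(1-q*X))^2 * (b*(1-q*X^2)*(1-q^3*X^2)))
        / ((c*(1-q^2*X^2)*(1-q^4*X^2)) * (d*(1-q^6*X^3))^2)"
    by (simp only: UU_def qint_def s2 qpoch_Suc g1 g2 g3 g4 g5 g6 g7 g8 a_def b_def c_def d_def)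
  have R: "UU q k = X * ((1-q*X^4)/(1-q)) * (a^2*b) / (c*d^2)"
    by (simp only: UU_def qint_def g9 X_def[symmetric] a_def b_def c_def d_def)
  have z0: "1-q*X^4 \<noteq> 0" unfolding X_def by (simp add: pw flip: power_Suc)
  have c0: "c \<noteq> 0" unfolding c_def by (rule qpoch_nz) (simp add: pw flip: power_Suc)
  have d0: "d \<noteq> 0" unfolding d_def by (rule qpoch_nz) (simp add: pw flip: power_Suc)
  have h1: "1-q^2*X^2 \<noteq> 0" unfolding X_def by (simp add: pw flip: power_Suc)
  have h2: "1-q^4*X^2 \<noteq> 0" unfolding X_def by (simp add: pw flip: power_Suc)
  have h3: "1-q^6*X^3 \<noteq> 0" unfolding X_def by (simp add: pw flip: power_Suc)
  have q10: "1-q \<noteq> 0" using q_eq1 by simp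
  show ?thesis unfolding X_def[symmetric] L R uk_def
    by (rule Ugen[OF z0 c0 d0 h1 h2 h3 q10])
qed


lemma VV_Suc: assumes kn: "k \<le> Suc n"
  shows "VV q (Suc n) (Suc k) = VV q (Suc n) k * vk q (q^(2*k)) (q^(6*n))"
proof -
  define X where "X = q^(2*k)"
  define Y where "Y = q^(6*n)"
  define c where "c = q^(3+6*Suc n)"
  define y where "y = inverse (q^(6*Suc n))"
  have e1: "c*(q^6)^k = q^9*Y*X^3" unfolding c_def X_def Y_def by (simp add: pw flip: power_Suc)
  have e3: "c*(q^2)^k = q^9*Y*X" unfolding c_def X_def Y_def by (simp add: pw flip: power_Suc)
  have W: "q^(6*Suc n) = q^6*Y" unfolding Y_def by (simp add: pw flip: power_Suc)
  have Z: "q^6*Y \<noteq> 0" by (simp add: Y_def q0)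
  have e2: "1 - y*(q^6)^k = (q^6*Y - X^3)/(q^6*Y)"
  proof -
    have "(q^6)^k = X^3" unfolding X_def by (simp add: pw flip: power_Suc)
    then show ?thesis unfolding y_def W using invgen[OF Z, of "X^3"] by simp
  qed
  have e4: "1 - y*(q^2)^k = (q^6*Y - X)/(q^6*Y)"
  proof -
    have "(q^2)^k = X" unfolding X_def by (simp add: pw flip: power_Suc)
    then show ?thesis unfolding y_def W using invgen[OF Z, of "X"] by simp
  qed
  have A3: "qpoch c (q^2) k \<noteq> 0" unfolding c_def by (rule qpoch_nz) (simp add: pw flip: power_Suc)
  have A4: "qpoch y (q^2) k \<noteq> 0" unfolding y_def
  proof (rule qpoch_nz)
    fix i assume i: "i < k"
    show "inverse (q^(6*Suc n)) * (q^2)^i \<noteq> 1"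
    proof
      assume "inverse (q^(6*Suc n)) * (q^2)^i = 1"
      hence "(q^2)^i = q^(6*Suc n)" using inv_eq1 by blast
      thus False using i kn by (simp add: pw flip: power_Suc)
    qed
  qed
  have x3: "1 - q^9*Y*X \<noteq> 0" unfolding X_def Y_def by (simp add: pw flip: power_Suc)
  have y4: "q^6*Y - X \<noteq> 0" unfolding X_def Y_def using kn by (simp add: pw flip: power_Suc)
  have "VV q (Suc n) (Suc k) = (qpoch c (q^6) k * (1 - q^9*Y*X^3) * (qpoch y (q^6) k * ((q^6*Y - X^3)/(q^6*Y))))
      / ((qpoch c (q^2) k * (1 - q^9*Y*X)) * (qpoch y (q^2) k * ((q^6*Y - X)/(q^6*Y))))"
    by (simp only: VV_def c_def[symmetric] y_def[symmetric] qpoch_Suc e1 e2 e3 e4)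
  also have "\<dots> = VV q (Suc n) k * vk q X Y"
    unfolding VV_def c_def[symmetric] y_def[symmetric] vk_def by (rule Vgen[OF A3 A4 x3 y4 Z])
  finally show ?thesis by (simp only: X_def Y_def)
qed

lemma CC_Suc: "CC q (Suc n) = CC q n * gam q (q^(6*n))"
proof -
  define Y where "Y = q^(6*n)"
  have s3: "3*Suc n = Suc(Suc(Suc(3*n)))" by simp
  have f1: "q^3*(q^2)^(3*n) = q^3*Y" unfolding Y_def by (simp add: pw flip: power_Suc)
  have f2: "q^3*(q^2)^(Suc(3*n)) = q^5*Y" unfolding Y_def by (simp add: pw flip: power_Suc)
  have f3: "q^3*(q^2)^(Suc(Suc(3*n))) = q^7*Y" unfolding Y_def by (simp add: pw flip: power_Suc)
  have f4: "q^3*(q^6)^n = q^3*Y" unfolding Y_def by (simp add: pw flip: power_Suc)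
  have f5: "q^2*(q^2)^(3*n) = q^2*Y" unfolding Y_def by (simp add: pw flip: power_Suc)
  have f6: "q^2*(q^2)^(Suc(3*n)) = q^4*Y" unfolding Y_def by (simp add: pw flip: power_Suc)
  have f7: "q^2*(q^2)^(Suc(Suc(3*n))) = q^6*Y" unfolding Y_def by (simp add: pw flip: power_Suc)
  have f8: "q^6*(q^6)^n = q^6*Y" unfolding Y_def by (simp add: pw flip: power_Suc)
  have c0: "qpoch (q^2) (q^2) (3*n) \<noteq> 0" by (rule qpoch_nz) (simp add: pw flip: power_Suc)
  have d0: "qpoch (q^6) (q^6) n \<noteq> 0" by (rule qpoch_nz) (simp add: pw flip: power_Suc)
  have y1: "1-q^2*Y \<noteq> 0" unfolding Y_def by (simp add: pw flip: power_Suc)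
  have y2: "1-q^4*Y \<noteq> 0" unfolding Y_def by (simp add: pw flip: power_Suc)
  have y3: "1-q^6*Y \<noteq> 0" unfolding Y_def by (simp add: pw flip: power_Suc)
  have "CC q (Suc n) = (qpoch (q^3) (q^2) (3*n) * (1-q^3*Y) * (1-q^5*Y) * (1-q^7*Y) * (qpoch (q^3) (q^6) n * (1-q^3*Y)))
      / ((qpoch (q^2) (q^2) (3*n) * (1-q^2*Y) * (1-q^4*Y) * (1-q^6*Y)) * (qpoch (q^6) (q^6) n * (1-q^6*Y)))"
    by (simp only: CC_def s3 qpoch_Suc f1 f2 f3 f4 f5 f6 f7 f8)
  also have "\<dots> = CC q n * gam q Y"
    unfolding CC_def gam_def by (rule Cgen[OF c0 d0 y1 y2 y3 y3])
  finally show ?thesis by (simp only: Y_def)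
qed


lemma V2: assumes n1: "1 \<le> n" and kn: "k \<le> Suc n"
  shows "VV q n k = VV q (Suc n) k * sig q (q^(2*k)) (q^(6*n))"
proof -
  define X where "X = q^(2*k)"
  define Y where "Y = q^(6*n)"
  define c where "c = q^(3+6*n)"
  define c' where "c' = q^(3+6*Suc n)"
  define yy where "yy = inverse (q^(6*n))"
  define y' where "y' = inverse (q^(6*Suc n))"
  have W: "q^(6*Suc n) = q^6*Y" unfolding Y_def by (simp add: pw flip: power_Suc)
  have yz: "y'*(q^6*Y) = 1" unfolding y'_def W using q0 by (simp add: Y_def field_simps)
  have yq: "y'*q^6 = yy" unfolding y'_def yy_def W Y_def using q0 by (simp add: field_simps)
  have eq1: "qpoch c (q^6) k * (1 - c*(q^6)^k) = (1-c)*qpoch (c*q^6) (q^6) k"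
    by (simp only: qpoch_Suc[symmetric] qpoch_shift)
  have j1: "c*q^6 = c'" unfolding c_def c'_def by (simp add: pw flip: power_Suc)
  have j2: "1 - c = 1 - q^3*Y" unfolding c_def Y_def by (simp add: pw flip: power_Suc)
  have j3: "c*(q^6)^k = q^3*Y*X^3" unfolding c_def Y_def X_def by (simp add: pw flip: power_Suc)
  have R1: "qpoch c (q^6) k * (1-q^3*Y*X^3) = qpoch c' (q^6) k * (1-q^3*Y)"
    using eq1 unfolding j1 j2 j3 by (metis mult.commute)
  have eq2: "qpoch y' (q^6) k * (1 - y'*(q^6)^k) = (1-y')*qpoch (y'*q^6) (q^6) k"
    by (simp only: qpoch_Suc[symmetric] qpoch_shift)
  have k2: "(q^6)^k = X^3" unfolding X_def by (simp add: pw flip: power_Suc)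
  have R2: "qpoch yy (q^6) k * (q^6*Y-1) = qpoch y' (q^6) k * (q^6*Y-X^3)"
    by (rule R2gen[OF yz]) (use eq2 in \<open>simp only: yq k2\<close>)
  have eq3: "qpoch c (q^2) k * (1-c*(q^2)^k) * (1-c*(q^2)^(Suc k)) * (1-c*(q^2)^(Suc(Suc k)))
      = (1-c)*((1-c*q^2)*((1-c*q^2*q^2)*qpoch (c*q^2*q^2*q^2) (q^2) k))"
  proof -
    have A: "qpoch c (q^2) (Suc(Suc(Suc k))) = qpoch c (q^2) k * (1-c*(q^2)^k) * (1-c*(q^2)^(Suc k)) * (1-c*(q^2)^(Suc(Suc k)))"
      by (simp only: qpoch_Suc)
    have B: "qpoch c (q^2) (Suc(Suc(Suc k))) = (1-c)*((1-c*q^2)*((1-c*q^2*q^2)*qpoch (c*q^2*q^2*q^2) (q^2) k))"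
      by (simp only: qpoch_shift)
    show ?thesis using A B by simp
  qed
  have m1: "c*(q^2)^k = q^3*Y*X" unfolding c_def Y_def X_def by (simp add: pw flip: power_Suc)
  have m2: "c*(q^2)^(Suc k) = q^5*Y*X" unfolding c_def Y_def X_def by (simp add: pw flip: power_Suc)
  have m3: "c*(q^2)^(Suc(Suc k)) = q^7*Y*X" unfolding c_def Y_def X_def by (simp add: pw flip: power_Suc)
  have m4: "1 - c*q^2 = 1 - q^5*Y" unfolding c_def Y_def by (simp add: pw flip: power_Suc)
  have m5: "1 - c*q^2*q^2 = 1 - q^7*Y" unfolding c_def Y_def by (simp add: pw flip: power_Suc)
  have m6: "c*q^2*q^2*q^2 = c'" unfolding c_def c'_def by (simp add: pw flip: power_Suc)
  have eq3': "qpoch c (q^2) k * (1-q^3*Y*X) * (1-q^5*Y*X) * (1-q^7*Y*X)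
      = (1-q^3*Y)*((1-q^5*Y)*((1-q^7*Y)*qpoch c' (q^2) k))"
    using eq3 unfolding m1 m2 m3 m4 m5 m6 j2 .
  have R3: "qpoch c' (q^2) k * ((1-q^3*Y)*(1-q^5*Y)*(1-q^7*Y)) = qpoch c (q^2) k * ((1-q^3*Y*X)*(1-q^5*Y*X)*(1-q^7*Y*X))"
    using eq3' by algebra
  have eq4: "qpoch y' (q^2) k * (1-y'*(q^2)^k) * (1-y'*(q^2)^(Suc k)) * (1-y'*(q^2)^(Suc(Suc k)))
      = (1-y')*((1-y'*q^2)*((1-y'*q^2*q^2)*qpoch (y'*q^2*q^2*q^2) (q^2) k))"
  proof -
    have A: "qpoch y' (q^2) (Suc(Suc(Suc k))) = qpoch y' (q^2) k * (1-y'*(q^2)^k) * (1-y'*(q^2)^(Suc k)) * (1-y'*(q^2)^(Suc(Suc k)))"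
      by (simp only: qpoch_Suc)
    have B: "qpoch y' (q^2) (Suc(Suc(Suc k))) = (1-y')*((1-y'*q^2)*((1-y'*q^2*q^2)*qpoch (y'*q^2*q^2*q^2) (q^2) k))"
      by (simp only: qpoch_shift)
    show ?thesis using A B by simp
  qed
  have n1': "y'*(q^2)^k = y'*X" unfolding X_def by (simp add: pw flip: power_Suc)
  have n2: "y'*(q^2)^(Suc k) = y'*q^2*X" unfolding X_def by (simp add: pw flip: power_Suc)
  have n3: "y'*(q^2)^(Suc(Suc k)) = y'*q^4*X" unfolding X_def by (simp add: pw flip: power_Suc)
  have n4: "1 - y'*q^2*q^2 = 1 - y'*q^4" by (simp add: pw flip: power_Suc)
  have n5: "y'*q^2*q^2*q^2 = yy"
  proof -
    have "y'*q^2*q^2*q^2 = y'*q^6" by algebra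
    thus ?thesis using yq by simp
  qed
  have eq4': "qpoch y' (q^2) k * (1-y'*X) * (1-y'*q^2*X) * (1-y'*q^4*X)
      = (1-y')*((1-y'*q^2)*((1-y'*q^4)*qpoch yy (q^2) k))"
    using eq4 unfolding n1' n2 n3 n4 n5 .
  have eq4'': "(1-y')*(1-y'*q^2)*(1-y'*q^4)*qpoch yy (q^2) k = qpoch y' (q^2) k*((1-y'*X)*(1-y'*q^2*X)*(1-y'*q^4*X))"
    using eq4' by algebra
  have R4: "qpoch yy (q^2) k * ((q^6*Y-1)*(q^4*Y-1)*(q^2*Y-1)) = qpoch y' (q^2) k * ((q^6*Y-X)*(q^4*Y-X)*(q^2*Y-X))"
    by (rule R4gen[OF yz q0 eq4''])
  have nC: "1-q^3*Y*X^3 \<noteq> 0" unfolding X_def Y_def by (simp add: pw flip: power_Suc)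
  have nQ1: "q^6*Y-1 \<noteq> 0" unfolding Y_def by (simp add: pw flip: power_Suc)
  have nP: "(1-q^3*Y*X)*(1-q^5*Y*X)*(1-q^7*Y*X) \<noteq> 0" unfolding X_def Y_def by (simp add: pw flip: power_Suc)
  have nQ: "(q^6*Y-1)*(q^4*Y-1)*(q^2*Y-1) \<noteq> 0" unfolding Y_def by (simp add: pw flip: power_Suc)
  have nB3: "qpoch c' (q^2) k \<noteq> 0" unfolding c'_def by (rule qpoch_nz) (simp add: pw flip: power_Suc)
  have nB4: "qpoch y' (q^2) k \<noteq> 0" unfolding y'_def
  proof (rule qpoch_nz)
    fix i assume i: "i < k"
    show "inverse (q^(6*Suc n)) * (q^2)^i \<noteq> 1"
    proof
      assume "inverse (q^(6*Suc n)) * (q^2)^i = 1"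
      hence "(q^2)^i = q^(6*Suc n)" using inv_eq1 by blast
      thus False using i kn by (simp add: pw flip: power_Suc)
    qed
  qed
  have "VV q n k = VV q (Suc n) k * sig q X Y"
    unfolding VV_def sig_def c_def[symmetric] c'_def[symmetric] yy_def[symmetric] y'_def[symmetric]
    by (rule V2gen[OF R1 R2 R3 R4 nC nQ1 nP nQ nB3 nB4])
  thus ?thesis by (simp only: X_def Y_def)
qed

lemma FF_Suc: assumes "k \<le> Suc n"
  shows "FF q (Suc n) (Suc k) = FF q (Suc n) k * (uk q (q^(2*k)) * vk q (q^(2*k)) (q^(6*n)))"
  unfolding FF_def UU_Suc VV_Suc[OF assms] by (simp add: mult_ac)

lemma FF_n: assumes "1 \<le> n" "k \<le> Suc n"
  shows "FF q n k = FF q (Suc n) k * s0 q (q^(2*k)) (q^(6*n))"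
proof -
  define X where "X = q^(2*k)"
  define Y where "Y = q^(6*n)"
  have nz: "1-q^3*Y\<noteq>0" "q^6*Y-1\<noteq>0" "1-q^5*Y\<noteq>0" "1-q^7*Y\<noteq>0" "1-q^3*Y*X^3\<noteq>0" "q^6*Y-X\<noteq>0" "q^4*Y-X\<noteq>0" "q^2*Y-X\<noteq>0"
     "1-q^2*Y\<noteq>0" "1-q^4*Y\<noteq>0" "1-q^6*Y\<noteq>0"
    unfolding X_def Y_def using assms q0 by (simp_all add: pw flip: power_Suc)
  have s: "sig q X Y * gam q Y = s0 q X Y" by (rule S0cancel[OF nz])
  have g: "gam q Y \<noteq> 0" unfolding gam_def using nz by simp
  have "FF q n k = UU q k * (VV q (Suc n) k * sig q X Y) / CC q n"
    unfolding FF_def V2[OF assms] X_def Y_def ..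
  also have "\<dots> = UU q k * VV q (Suc n) k / (CC q n * gam q Y) * (sig q X Y * gam q Y)"
    using g CC_nz[of n] by (simp add: field_simps)
  also have "\<dots> = FF q (Suc n) k * s0 q X Y"
    unfolding FF_def CC_Suc Y_def[symmetric] s ..
  finally show ?thesis by (simp only: X_def Y_def)
qed

lemma GG_Suc: assumes "1 \<le> n" "k \<le> Suc n"
  shows "GG q n (Suc k) = FF q (Suc n) k * t1 q (q^(2*k)) (q^(6*n))"
proof -
  define X where "X = q^(2*k)"
  define Y where "Y = q^(6*n)"
  have nz: "q\<noteq>0" "X\<noteq>0" "1-q^9*X^4\<noteq>0" "1-q*X^4\<noteq>0" "1-q^2*X^2\<noteq>0" "1-q^4*X^2\<noteq>0" "1-q^6*X^3\<noteq>0"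
     "1-q^9*Y*X^3\<noteq>0" "1-q^9*Y*X\<noteq>0" "q^6*Y-X\<noteq>0" "1-q^6*Y\<noteq>0" "q^4*Y-X\<noteq>0" "q^2*Y-X\<noteq>0"
    unfolding X_def Y_def using assms q0 by (simp_all add: pw flip: power_Suc)
  have e: "q^(2*Suc k) = q^2*X" unfolding X_def by (simp add: pw flip: power_Suc)
  have "GG q n (Suc k) = FF q (Suc n) k * (uk q X * vk q X Y * s1 q (q^2*X) Y)"
    unfolding GG_def FF_Suc[OF assms(2)] e X_def Y_def by (simp only: mult_ac)
  also have "\<dots> = FF q (Suc n) k * t1 q X Y" unfolding T1cancel[OF nz] ..
  finally show ?thesis by (simp only: X_def Y_def)
qed

lemma WZ: assumes "1 \<le> n" "k \<le> Suc n"
  shows "FF q (Suc n) k - FF q n k = GG q n (Suc k) - GG q n k"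
proof -
  define X where "X = q^(2*k)"
  define Y where "Y = q^(6*n)"
  have nz: "X \<noteq> 0" "1-q*X^4 \<noteq> 0" "1-q^6*Y \<noteq> 0" "q^6*Y-X \<noteq> 0" "q^4*Y-X \<noteq> 0" "q^2*Y-X \<noteq> 0"
     "1-q^3*X^3*Y \<noteq> 0" "1-q^2*Y \<noteq> 0" "1-q^4*Y \<noteq> 0"
    unfolding X_def Y_def using assms q0 by (simp_all add: pw flip: power_Suc)
  have w: "1 - s0 q X Y = t1 q X Y - s1 q X Y" by (rule coreW[OF nz])
  have "FF q (Suc n) k - FF q n k = FF q (Suc n) k * (1 - s0 q X Y)"
    unfolding FF_n[OF assms] X_def Y_def by (simp add: algebra_simps)
  also have "\<dots> = FF q (Suc n) k * t1 q X Y - FF q (Suc n) k * s1 q X Y" unfolding w by (simp add: algebra_simps)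
  also have "\<dots> = GG q n (Suc k) - GG q n k" using GG_Suc[OF assms] GG_def[of q n k] by (simp add: X_def Y_def)
  finally show ?thesis .
qed

lemma FF_top: "FF q n (Suc n) = 0"
proof -
  have "qpoch (inverse (q ^ (6*n))) (q^6) (Suc n) = 0"
    by (rule qpoch_z[of n]) (simp_all add: pw q0 flip: power_Suc)
  thus ?thesis unfolding FF_def VV_def by simp
qed

lemma GG_0: "GG q n 0 = 0" unfolding GG_def s1_def by simp

lemma GG_top: "GG q n (Suc (Suc n)) = 0" unfolding GG_def FF_top by simp

lemma UU_0: "UU q 0 = 1" unfolding UU_def qint_def using q_eq1 by simp
lemma VV_0: "VV q n 0 = 1" unfolding VV_def by simp
lemma CC_0: "CC q 0 = 1" unfolding CC_def by simp

lemma FF_1_1: "FF q 1 1 = uk q 1 * vk q 1 1 / gam q 1"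
proof -
  have "FF q (Suc 0) (Suc 0) = FF q (Suc 0) 0 * (uk q (q^(2*0)) * vk q (q^(2*0)) (q^(6*0)))"
    by (rule FF_Suc) simp
  moreover have "FF q (Suc 0) 0 = 1 / gam q 1"
    unfolding FF_def UU_0 VV_0 CC_Suc CC_0 by simp
  ultimately show ?thesis by simp
qed

lemma gam1: "gam q 1 = 1 + uk q 1 * vk q 1 1"
proof -
  have nz: "1-q \<noteq> 0" "1-q^2 \<noteq> 0" "1-q^4\<noteq>0" "1-q^6\<noteq>0" "1-q^9\<noteq>0" "q^6-1\<noteq>0" using q_eq1 by (simp_all add: pw)
  have v: "vk q 1 1 = 1" unfolding vk_def using nz by simp
  have g: "gam q 1 = ((1-q^3)*(1-q^5)*(1-q^7)*(1-q^3))/((1-q^2)*(1-q^4)*(1-q^6)*(1-q^6))" unfolding gam_def by simp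
  have u: "uk q 1 = (q^2*(1-q^9)*((1-q)^2*(1-q)*(1-q^3))) / ((1-q)*((1-q^2)*(1-q^4)*(1-q^6)^2))" unfolding uk_def by simp
  have p: "((1-q^3)*(1-q^5)*(1-q^7)*(1-q^3)) * ((1-q)*((1-q^2)*(1-q^4)*(1-q^6)^2))
     = ((1-q)*((1-q^2)*(1-q^4)*(1-q^6)^2) + q^2*(1-q^9)*((1-q)^2*(1-q)*(1-q^3))) * ((1-q^2)*(1-q^4)*(1-q^6)*(1-q^6))" by algebra
  show ?thesis unfolding v g u mult_1_right
    by (rule fr1[OF _ _ p]) (use nz in simp_all)
qed


lemma gam1_nz: "gam q 1 \<noteq> 0"
  unfolding gam_def by (simp add: pw q_eq1 flip: power_Suc)

lemma FF_1_0: "FF q 1 0 = 1 / gam q 1"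
proof -
  have "FF q (Suc 0) 0 = 1 / gam q 1" unfolding FF_def UU_0 VV_0 CC_Suc CC_0 by simp
  thus ?thesis by simp
qed

lemma sumF: assumes "1 \<le> n" shows "(\<Sum>k=0..n. FF q n k) = 1"
  using assms
proof (induction n rule: nat_induct_at_least)
  case base
  have "(\<Sum>k=0..1. FF q 1 k) = FF q 1 0 + FF q 1 1" by (simp add: numeral_One)
  also have "\<dots> = (1 + uk q 1 * vk q 1 1) / gam q 1" unfolding FF_1_0 FF_1_1 by (simp add: add_divide_distrib)
  also have "\<dots> = 1" unfolding gam1[symmetric] using gam1_nz by simp
  finally show ?case .
next
  case (Suc n)
  have wz: "FF q (Suc n) k = FF q n k + (GG q n (Suc k) - GG q n k)" if "k \<in> {0..Suc n}" for k
  proof -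
    have "FF q (Suc n) k - FF q n k = GG q n (Suc k) - GG q n k" using WZ[OF Suc.hyps(1)] that by simp
    thus ?thesis by (simp add: algebra_simps)
  qed
  have "(\<Sum>k=0..Suc n. FF q (Suc n) k) = (\<Sum>k=0..Suc n. FF q n k + (GG q n (Suc k) - GG q n k))"
    by (rule sum.cong[OF refl]) (rule wz)
  also have "\<dots> = (\<Sum>k=0..Suc n. FF q n k) + (\<Sum>k=0..Suc n. GG q n (Suc k) - GG q n k)"
    by (rule sum.distrib)
  also have "(\<Sum>k=0..Suc n. GG q n (Suc k) - GG q n k) = GG q n (Suc (Suc n)) - GG q n 0"
    by (rule sum_Suc_diff) simp
  also have "(\<Sum>k=0..Suc n. FF q n k) = (\<Sum>k=0..n. FF q n k) + FF q n (Suc n)"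
    by (rule sum.atLeast0_atMost_Suc)
  finally show ?case using Suc.IH by (simp add: FF_top GG_top GG_0)
qed

lemma qi: "q^m/(qint q m)^2 = (1-q)^2 * (q^m/(1-q^m)^2)"
  unfolding qint_def by (simp add: power_divide)

lemma HH_0: "HH q 0 = 0" unfolding HH_def by simp

lemma HH_Suc: "HH q (Suc k) = HH q k + (q^(2*k+1)/(qint q (2*k+1))^2 - q^(6*Suc k)/(qint q (6*Suc k))^2)"
  unfolding HH_def by (simp add: sum.cl_ivl_Suc)

lemma s1b: "s1 q (q^(2*k)) Y * (q^(6*k)/(qint q (6*k))^2) = (1-q)^2 * s1c q (q^(2*k)) Y"
proof (cases "k = 0")
  case True
  thus ?thesis unfolding s1_def s1c_def by simp
next
  case False
  define X where "X = q^(2*k)"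
  have X0: "X \<noteq> 0" unfolding X_def by (simp add: q0)
  have X3: "1 - X^3 \<noteq> 0" unfolding X_def using False by (simp add: pw flip: power_Suc)
  have e: "q^(6*k) = X^3" unfolding X_def by (simp add: pw flip: power_Suc)
  show ?thesis unfolding qi unfolding X_def[symmetric] e s1_def using X0 X3 by (simp add: field_simps)
qed

lemma harmstep: assumes n1: "1 \<le> n" and kn: "k \<le> Suc n"
  shows "GG q n (Suc k) * (HH q (Suc k) + (q^(6*Suc k)/(qint q (6*Suc k))^2 - q^(6*n+3)/(qint q (6*n+3))^2))
       - GG q n k * (HH q k + (q^(6*k)/(qint q (6*k))^2 - q^(6*n+3)/(qint q (6*n+3))^2))
     = (FF q (Suc n) k - FF q n k) * HH q k - (q^(6*n+3)/(qint q (6*n+3))^2 - q^(6*n+6)/(qint q (6*n+6))^2) * FF q (Suc n) k"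
proof -
  define X where "X = q^(2*k)"
  define Y where "Y = q^(6*n)"
  have nz: "X \<noteq> 0" "1-q*X \<noteq> 0" "1-q*X^4 \<noteq> 0" "1-q^6*Y \<noteq> 0" "q^6*Y-X \<noteq> 0" "q^4*Y-X \<noteq> 0" "q^2*Y-X \<noteq> 0"
     "1-q^3*X^3*Y \<noteq> 0" "1-q^2*Y \<noteq> 0" "1-q^4*Y \<noteq> 0" "1-q^3*Y \<noteq> 0"
    unfolding X_def Y_def using assms q0 by (simp_all add: pw flip: power_Suc)
  have W: "1 - s0 q X Y = t1 q X Y - s1 q X Y"
    by (rule coreW[OF nz(1) nz(3) nz(4) nz(5) nz(6) nz(7) nz(8) nz(9) nz(10)])
  have H: "t1 q X Y * (q*X/(1-q*X)^2) - s1c q X Y + s0 q X Y * (q^3*Y/(1-q^3*Y)^2) - q^6*Y/(1-q^6*Y)^2 = 0"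
    by (rule coreH[OF nz])
  have pa: "q^(2*k+1) = q*X" unfolding X_def by (simp add: pw flip: power_Suc)
  have pe: "q^(6*n+3) = q^3*Y" unfolding Y_def by (simp add: pw flip: power_Suc)
  have pf: "q^(6*n+6) = q^6*Y" unfolding Y_def by (simp add: pw flip: power_Suc)
  have H1: "t1 q X Y * (q^(2*k+1)/(qint q (2*k+1))^2) - s1 q X Y * (q^(6*k)/(qint q (6*k))^2)
      + (q^(6*n+3)/(qint q (6*n+3))^2) * s0 q X Y - q^(6*n+6)/(qint q (6*n+6))^2 = 0"
  proof (rule h1gen[OF _ _ _ _ H])
    show "q^(2*k+1)/(qint q (2*k+1))^2 = (1-q)^2 * (q*X/(1-q*X)^2)" unfolding qi unfolding pa ..
    show "s1 q X Y * (q^(6*k)/(qint q (6*k))^2) = (1-q)^2 * s1c q X Y" unfolding X_def by (rule s1b)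
    show "q^(6*n+3)/(qint q (6*n+3))^2 = (1-q)^2 * (q^3*Y/(1-q^3*Y)^2)" unfolding qi unfolding pe ..
    show "q^(6*n+6)/(qint q (6*n+6))^2 = (1-q)^2 * (q^6*Y/(1-q^6*Y)^2)" unfolding qi unfolding pf ..
  qed
  have W1: "t1 q X Y - s1 q X Y - 1 + s0 q X Y = 0" using W by (simp add: algebra_simps)
  have g1: "GG q n (Suc k) = FF q (Suc n) k * t1 q X Y" unfolding X_def Y_def by (rule GG_Suc[OF n1 kn])
  have g0: "GG q n k = FF q (Suc n) k * s1 q X Y" unfolding GG_def X_def Y_def ..
  have f0: "FF q n k = FF q (Suc n) k * s0 q X Y" unfolding X_def Y_def by (rule FF_n[OF n1 kn])
  show ?thesis unfolding g1 g0 f0 HH_Suc add.assoc[symmetric]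
    using stepgen[OF W1 H1, of "FF q (Suc n) k" "HH q k" "q^(6*Suc k)/(qint q (6*Suc k))^2"]
    by (simp add: algebra_simps)
qed


lemma DD_Suc: "DD q (Suc n) = DD q n + (q^(6*n+3)/(qint q (6*n+3))^2 - q^(6*n+6)/(qint q (6*n+6))^2)"
proof -
  have s: "2*Suc n = Suc (Suc (2*n))" by simp
  have a: "3*Suc(2*n) = 6*n+3" by simp
  have b: "3*Suc(Suc(2*n)) = 6*n+6" by simp
  have m1: "(-1::complex)^(Suc (2*n) - 1) = 1" by (simp add: power_mult)
  have m2: "(-1::complex)^(Suc (Suc (2*n)) - 1) = -1" by (simp add: power_mult)
  show ?thesis unfolding DD_def s sum.cl_ivl_Suc a b m1 m2 by simp
qed

lemma FF11R: "FF q 1 1 = (q^2*(1-q^9)*(1-q)^2)/((1-q^3)*(1-q^5)*(1-q^7))"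
proof -
  have nz: "1-q \<noteq> 0" "1-q^2 \<noteq> 0" "1-q^3 \<noteq> 0" "1-q^4\<noteq>0" "1-q^5\<noteq>0" "1-q^6\<noteq>0" "1-q^7\<noteq>0" "1-q^9\<noteq>0" "q^6-1\<noteq>0"
    using q_eq1 by (simp_all add: pw)
  have v: "vk q 1 1 = 1" unfolding vk_def using nz by simp
  have u: "uk q 1 = (q^2*(1-q^9)*((1-q)^2*(1-q)*(1-q^3))) / ((1-q)*((1-q^2)*(1-q^4)*(1-q^6)^2))"
    unfolding uk_def by simp
  have g: "gam q 1 = ((1-q^3)*(1-q^5)*(1-q^7)*(1-q^3))/((1-q^2)*(1-q^4)*(1-q^6)*(1-q^6))"
    unfolding gam_def by simp
  have p: "(q^2*(1-q^9)*((1-q)^2*(1-q)*(1-q^3))) * ((1-q^2)*(1-q^4)*(1-q^6)*(1-q^6)) * ((1-q^3)*(1-q^5)*(1-q^7))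
     = (q^2*(1-q^9)*(1-q)^2) * (((1-q)*((1-q^2)*(1-q^4)*(1-q^6)^2)) * ((1-q^3)*(1-q^5)*(1-q^7)*(1-q^3)))"
    by algebra
  show ?thesis unfolding FF_1_1 v u g mult_1_right divide_divide_times_eq
    using nz p by (simp add: frac_eq_eq)
qed

lemma harm: assumes "1 \<le> n" shows "(\<Sum>k=0..n. FF q n k * HH q k) = DD q n"
  using assms
proof (induction n rule: nat_induct_at_least)
  case base
  have nz: "1-q^3 \<noteq> 0" "1-q^5\<noteq>0" "1-q^6\<noteq>0" "1-q^7\<noteq>0"
    using q_eq1 by (simp_all add: pw)
  have q1i: "qint q 1 = 1" unfolding qint_def using q_eq1 by simp
  have h1: "HH q 1 = q - ((1-q)^2*q^6)/((1-q^6)^2)"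
  proof -
    have "HH q (Suc 0) = q^(2*0+1)/(qint q (2*0+1))^2 - q^(6*Suc 0)/(qint q (6*Suc 0))^2"
      unfolding HH_Suc HH_0 by simp
    thus ?thesis unfolding qi using q_eq1 by (simp add: q1i)
  qed
  have d1: "DD q 1 = ((1-q)^2*q^3)/((1-q^3)^2) - ((1-q)^2*q^6)/((1-q^6)^2)"
  proof -
    have "DD q (Suc 0) = DD q 0 + (q^(6*0+3)/(qint q (6*0+3))^2 - q^(6*0+6)/(qint q (6*0+6))^2)"
      by (rule DD_Suc)
    thus ?thesis unfolding qi by (simp add: DD_def)
  qed
  have p: "(q^2*(1-q^9)*(1-q)^2)*(q*(1-q^6)^2 - (1-q)^2*q^6)*(1-q^3)^2
      = (((1-q)^2*q^3)*(1-q^6)^2 - ((1-q)^2*q^6)*(1-q^3)^2)*((1-q^3)*(1-q^5)*(1-q^7))" by algebra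
  have "(\<Sum>k=0..1. FF q 1 k * HH q k) = FF q 1 0 * HH q 0 + FF q 1 1 * HH q 1" by (simp add: numeral_One)
  also have "\<dots> = FF q 1 1 * HH q 1" by (simp add: HH_0)
  also have "\<dots> = DD q 1" unfolding FF11R h1 d1
    by (rule basegen[OF _ _ _ p]) (use nz in simp_all)
  finally show ?case .
next
  case (Suc n)
  define e where "e = q^(6*n+3)/(qint q (6*n+3))^2"
  define f where "f = q^(6*n+6)/(qint q (6*n+6))^2"
  define Wf where "Wf = (\<lambda>k. GG q n k * (HH q k + (q^(6*k)/(qint q (6*k))^2 - e)))"
  have st: "(FF q (Suc n) k - FF q n k) * HH q k - (e - f) * FF q (Suc n) k = Wf (Suc k) - Wf k"
    if "k \<in> {0..Suc n}" for k
    using harmstep[OF Suc.hyps(1), of k] that unfolding Wf_def e_def f_def by simp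
  have "(\<Sum>k=0..Suc n. (FF q (Suc n) k - FF q n k) * HH q k - (e - f) * FF q (Suc n) k)
      = (\<Sum>k=0..Suc n. Wf (Suc k) - Wf k)"
    by (rule sum.cong[OF refl]) (rule st)
  also have "\<dots> = Wf (Suc (Suc n)) - Wf 0" by (rule sum_Suc_diff) simp
  also have "\<dots> = 0" unfolding Wf_def by (simp add: GG_top GG_0)
  finally have T: "(\<Sum>k=0..Suc n. (FF q (Suc n) k - FF q n k) * HH q k - (e - f) * FF q (Suc n) k) = 0" .
  have T2: "(\<Sum>k=0..Suc n. FF q (Suc n) k * HH q k) - (\<Sum>k=0..Suc n. FF q n k * HH q k)
      - (e - f) * (\<Sum>k=0..Suc n. FF q (Suc n) k) = 0"
  proof -
    have "(\<Sum>k=0..Suc n. (FF q (Suc n) k - FF q n k) * HH q k - (e - f) * FF q (Suc n) k)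
      = (\<Sum>k=0..Suc n. FF q (Suc n) k * HH q k) - (\<Sum>k=0..Suc n. FF q n k * HH q k)
      - (e - f) * (\<Sum>k=0..Suc n. FF q (Suc n) k)"
      by (simp only: sum_subtractf left_diff_distrib sum_distrib_left)
    thus ?thesis using T by simp
  qed
  have S1: "(\<Sum>k=0..Suc n. FF q (Suc n) k) = 1" by (rule sumF) simp
  have S0: "(\<Sum>k=0..Suc n. FF q n k * HH q k) = DD q n"
    using Suc.IH by (simp add: FF_top)
  have "(\<Sum>k=0..Suc n. FF q (Suc n) k * HH q k) = DD q n + (e - f)"
    using T2 unfolding S1 S0 by (simp add: algebra_simps)
  thus ?case unfolding DD_Suc e_def f_def .
qed

lemma main_aux: assumes "1 \<le> n" shows "(\<Sum>k=1..n. UU q k * VV q n k * HH q k) = CC q n * DD q n"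
proof -
  have "(\<Sum>k=0..n. FF q n k * HH q k) = (\<Sum>k=0..n. UU q k * VV q n k * HH q k) / CC q n"
    unfolding FF_def by (simp add: sum_divide_distrib)
  hence "(\<Sum>k=0..n. UU q k * VV q n k * HH q k) = CC q n * DD q n"
    using harm[OF assms] CC_nz[of n] by (simp add: field_simps)
  moreover have "(\<Sum>k=0..n. UU q k * VV q n k * HH q k) = (\<Sum>k=1..n. UU q k * VV q n k * HH q k)"
    by (simp add: sum.atLeast_Suc_atMost HH_0)
  ultimately show ?thesis by simp
qed

end

theorem mainTheorem11:
  fixes q :: complex and n :: nat
  assumes "n \<ge> 1" and "0 < cmod q" and "cmod q < 1"
  shows "(\<Sum>k=1..n. q ^ (2*k) * qint q (8*k+1)
            * (qpoch q (q^2) k ^ 2 * qpoch q (q^2) (2*k))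
              / (qpoch (q^2) (q^2) (2*k) * qpoch (q^6) (q^6) k ^ 2)
            * (qpoch (q ^ (3+6*n)) (q^6) k * qpoch (inverse (q ^ (6*n))) (q^6) k)
              / (qpoch (q ^ (3+6*n)) (q^2) k * qpoch (inverse (q ^ (6*n))) (q^2) k)
            * (\<Sum>i=1..k. q ^ (2*i-1) / (qint q (2*i-1))^2 - q ^ (6*i) / (qint q (6*i))^2))
       = (qpoch (q^3) (q^2) (3*n) * qpoch (q^3) (q^6) n)
           / (qpoch (q^2) (q^2) (3*n) * qpoch (q^6) (q^6) n)
         * (\<Sum>j=1..2*n. (-1) ^ (j-1) * q ^ (3*j) / (qint q (3*j))^2)"
proof -
  have q0: "q \<noteq> 0" using assms(2) by auto
  have "(\<Sum>k=1..n. UU q k * VV q n k * HH q k) = CC q n * DD q n"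
    by (rule main_aux[OF q0 assms(3) assms(1)])
  thus ?thesis unfolding UU_def VV_def HH_def CC_def DD_def times_divide_eq_right .
qed


end
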